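(* Let $m,n$ be positive integers, $r$ an integer with $1\leq r\leq\min\{m,n\}$ if $m\neq n$ and $1\le r\le n-1$ if $m=n$, and $a\in\{0,\dots,r\}$. Let $Q(\lambda)$ be an $m\times n$ complex matrix pencil with normal rank at most $r$. If $Q\in\overline{{\cal O}({\cal K}_a^{m\times n})}$, then $Q(\lambda)^T\in\overline{{\cal O}({\cal K}_{r-a}^{n\times m})}$.
   Context: A matrix pencil is $A+\lambda B$ with complex matrices; normal rank is rank over $\mathbb{C}(\lambda)$. ${\cal O}(Q)$ denotes the orbit of $Q$ under strict equivalence ($Q\mapsto EQF$, $E,F$ constant invertible) and the bar denotes closure in the space of pencils of the given size. $L_k$ is the $k\times(k+1)$ pencil with $\lambda$ at $(i,i)$ and $1$ at $(i,i+1)$. For sizes $p\times q$ and $b\in\{0,\dots,r\}$, ${\cal K}_b^{p\times q}$ is defined by the Euclidean divisions $b=\alpha(q-r)+s$ ($0\le s<q-r$), $r-b=\beta(p-r)+t$ ($0\le t<p-r$), as the $p\times q$ block-diagonal pencil with $s$ blocks $L_{\alpha+1}$, $q-r-s$ blocks $L_\alpha$, $t$ blocks $L_{\beta+1}^T$ and $p-r-t$ blocks $L_\beta^T$. *)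

theory Defs
  imports "Jordan_Normal_Form.Matrix" "Jordan_Normal_Form.DL_Rank"
          "HOL-Computational_Algebra.Fraction_Field"
begin

text \<open>A matrix pencil A + \<lambda> B is represented by the pair (A, B) of complex matrices.\<close>
type_synonym pencil = "complex mat \<times> complex mat"

definition is_pencil :: "nat \<Rightarrow> nat \<Rightarrow> pencil \<Rightarrow> bool" where
  "is_pencil p q P \<longleftrightarrow> fst P \<in> carrier_mat p q \<and> snd P \<in> carrier_mat p q"

definition pencil_ratmat :: "pencil \<Rightarrow> complex poly fract mat" where
  "pencil_ratmat P = mat (dim_row (fst P)) (dim_col (fst P))
      (\<lambda>(i,j). Fract [: fst P $$ (i,j), snd P $$ (i,j) :] 1)"

definition normal_rank :: "pencil \<Rightarrow> nat" where
  "normal_rank P = vec_space.rank (dim_row (fst P)) (pencil_ratmat P)"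

definition pencil_transpose :: "pencil \<Rightarrow> pencil" where
  "pencil_transpose P = (transpose_mat (fst P), transpose_mat (snd P))"

definition orbit :: "pencil \<Rightarrow> pencil set" where
  "orbit P = {(E * fst P * F, E * snd P * F) | E F.
      E \<in> carrier_mat (dim_row (fst P)) (dim_row (fst P)) \<and>
      F \<in> carrier_mat (dim_col (fst P)) (dim_col (fst P)) \<and>
      invertible_mat E \<and> invertible_mat F}"

text \<open>Closure in the (Euclidean) space of p x q pencils, written via sequences
  (the space is finite-dimensional, so closure = sequential closure).\<close>
definition pencil_closure :: "nat \<Rightarrow> nat \<Rightarrow> pencil set \<Rightarrow> pencil set" where
  "pencil_closure p q S = {Q. is_pencil p q Q \<and>
      (\<exists>X :: nat \<Rightarrow> pencil. (\<forall>k. X k \<in> S \<and> is_pencil p q (X k)) \<and>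
         (\<forall>i<p. \<forall>j<q. (\<lambda>k. fst (X k) $$ (i,j)) \<longlonglongrightarrow> fst Q $$ (i,j) \<and>
                       (\<lambda>k. snd (X k) $$ (i,j)) \<longlonglongrightarrow> snd Q $$ (i,j)))}"

definition L_block :: "nat \<Rightarrow> pencil" where
  "L_block k = (mat k (k+1) (\<lambda>(i,j). if j = i + 1 then 1 else 0),
                mat k (k+1) (\<lambda>(i,j). if j = i then 1 else 0))"

definition LT_block :: "nat \<Rightarrow> pencil" where
  "LT_block k = pencil_transpose (L_block k)"

definition bdiag_mat :: "complex mat \<Rightarrow> complex mat \<Rightarrow> complex mat" where
  "bdiag_mat A B = four_block_mat A (0\<^sub>m (dim_row A) (dim_col B)) (0\<^sub>m (dim_row B) (dim_col A)) B"

fun pencil_bdiag :: "pencil list \<Rightarrow> pencil" where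
  "pencil_bdiag [] = (0\<^sub>m 0 0, 0\<^sub>m 0 0)"
| "pencil_bdiag (P # Ps) =
     (bdiag_mat (fst P) (fst (pencil_bdiag Ps)), bdiag_mat (snd P) (snd (pencil_bdiag Ps)))"

definition K_pencil :: "nat \<Rightarrow> nat \<Rightarrow> nat \<Rightarrow> nat \<Rightarrow> pencil" where
  "K_pencil p q r b =
    (let \<alpha> = b div (q - r); s = b mod (q - r);
         \<beta> = (r - b) div (p - r); t = (r - b) mod (p - r)
     in pencil_bdiag (replicate s (L_block (\<alpha> + 1)) @ replicate (q - r - s) (L_block \<alpha>) @
                      replicate t (LT_block (\<beta> + 1)) @ replicate (p - r - t) (LT_block \<beta>)))"

end

theory Submission
  imports Defs
begin

definition FB :: "complex mat \<Rightarrow> complex mat \<Rightarrow> complex mat" where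
  "FB A B = four_block_mat A (0\<^sub>m (dim_row A) (dim_col B)) (0\<^sub>m (dim_row B) (dim_col A)) B"

lemma bdiag_fst: "fst (pencil_bdiag Ps) = diag_block_mat (map fst Ps)"
  by (induct Ps) (auto simp: bdiag_mat_def Let_def)
lemma bdiag_snd: "snd (pencil_bdiag Ps) = diag_block_mat (map snd Ps)"
  by (induct Ps) (auto simp: bdiag_mat_def Let_def)

lemma diag_append: "diag_block_mat (As @ Bs) = FB (diag_block_mat As) (diag_block_mat Bs)"
  unfolding diag_block_mat_append FB_def Let_def ..

lemma transpose_zero: "transpose_mat (0\<^sub>m a b) = (0\<^sub>m b a :: complex mat)"
  by (intro eq_matI) auto

lemma transpose_diag: "transpose_mat (diag_block_mat As) = diag_block_mat (map transpose_mat (As :: complex mat list))"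
proof (induct As)
  case Nil then show ?case by (simp add: transpose_zero)
next
  case (Cons A As)
  let ?B = "diag_block_mat As"
  have "transpose_mat (diag_block_mat (A # As)) =
     four_block_mat (transpose_mat A) (transpose_mat (0\<^sub>m (dim_row ?B) (dim_col A))) (transpose_mat (0\<^sub>m (dim_row A) (dim_col ?B))) (transpose_mat ?B)"
    unfolding diag_block_mat.simps Let_def by (rule transpose_four_block_mat[of A "dim_row A" "dim_col A" _ "dim_col ?B" _ "dim_row ?B"]) auto
  also have "\<dots> = diag_block_mat (map transpose_mat (A # As))"
  proof -
    have d: "dim_col (diag_block_mat (map transpose_mat As)) = dim_row ?B"
         "dim_row (diag_block_mat (map transpose_mat As)) = dim_col ?B"
      by (metis Cons index_transpose_mat(2,3))+
    show ?thesis using Cons by (simp add: Let_def d)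
  qed
  finally show ?case .
qed

lemma pt_bdiag: "pencil_transpose (pencil_bdiag Ps) = pencil_bdiag (map pencil_transpose Ps)"
  by (simp add: pencil_transpose_def bdiag_fst bdiag_snd transpose_diag prod_eq_iff o_def)

definition perm_mat :: "nat \<Rightarrow> (nat \<Rightarrow> nat) \<Rightarrow> complex mat" where
  "perm_mat n f = mat n n (\<lambda>(i,j). if j = f i then 1 else 0)"

lemma perm_left: assumes M: "M \<in> carrier_mat n c" and f: "\<And>i. i < n \<Longrightarrow> f i < n"
  shows "perm_mat n f * M = mat n c (\<lambda>(i,j). M $$ (f i, j))"
proof (rule eq_matI)
  fix i j assume i: "i < dim_row (mat n c (\<lambda>(i,j). M $$ (f i, j)))" and j: "j < dim_col (mat n c (\<lambda>(i,j). M $$ (f i, j)))"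
  hence i: "i < n" and j: "j < c" by auto
  have "(perm_mat n f * M) $$ (i,j) = (\<Sum>k\<in>{0..<n}. (if k = f i then 1 else 0) * M $$ (k,j))"
    using i j M by (simp add: perm_mat_def scalar_prod_def)
  also have "\<dots> = (\<Sum>k\<in>{0..<n}. if k = f i then M $$ (k,j) else 0)"
    by (rule sum.cong) auto
  also have "\<dots> = M $$ (f i, j)" using f[OF i] by simp
  finally show "(perm_mat n f * M) $$ (i,j) = mat n c (\<lambda>(i,j). M $$ (f i, j)) $$ (i,j)" using i j by simp
qed (use M in \<open>auto simp: perm_mat_def\<close>)

lemma perm_right: assumes M: "M \<in> carrier_mat r n" and f: "\<And>i. i < n \<Longrightarrow> f i < n"
  shows "M * transpose_mat (perm_mat n f) = mat r n (\<lambda>(i,j). M $$ (i, f j))"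
proof (rule eq_matI)
  fix i j assume i: "i < dim_row (mat r n (\<lambda>(i,j). M $$ (i, f j)))" and j: "j < dim_col (mat r n (\<lambda>(i,j). M $$ (i, f j)))"
  hence i: "i < r" and j: "j < n" by auto
  have "(M * transpose_mat (perm_mat n f)) $$ (i,j) = (\<Sum>k\<in>{0..<n}. M $$ (i,k) * (if k = f j then 1 else 0))"
    using i j M by (simp add: perm_mat_def scalar_prod_def)
  also have "\<dots> = (\<Sum>k\<in>{0..<n}. if k = f j then M $$ (i,k) else 0)"
    by (rule sum.cong) auto
  also have "\<dots> = M $$ (i, f j)" using f[OF j] by simp
  finally show "(M * transpose_mat (perm_mat n f)) $$ (i,j) = mat r n (\<lambda>(i,j). M $$ (i, f j)) $$ (i,j)" using i j by simp
qed (use M in \<open>auto simp: perm_mat_def\<close>)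


lemma inv_carrier: assumes "A \<in> carrier_mat n n" "inverts_mat A B" "inverts_mat B A"
  shows "B \<in> carrier_mat n n"
proof -
  have "dim_col (A * B) = n" using assms unfolding inverts_mat_def by auto
  moreover have "dim_row (B * A) = dim_col (B * A)" using assms(3) unfolding inverts_mat_def by simp
  ultimately show ?thesis using assms(1) by auto
qed

lemma invertible_mult: assumes A: "A \<in> carrier_mat n n" and B: "B \<in> carrier_mat n n"
  and iA: "invertible_mat (A::complex mat)" and iB: "invertible_mat B"
  shows "invertible_mat (A * B)"
proof -
  obtain A' where A': "inverts_mat A A'" "inverts_mat A' A" using iA unfolding invertible_mat_def by blast
  obtain B' where B': "inverts_mat B B'" "inverts_mat B' B" using iB unfolding invertible_mat_def by blast
  have cA: "A' \<in> carrier_mat n n" using inv_carrier[OF A A'] .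
  have cB: "B' \<in> carrier_mat n n" using inv_carrier[OF B B'] .
  have 1: "A * A' = 1\<^sub>m n" "A' * A = 1\<^sub>m n" "B * B' = 1\<^sub>m n" "B' * B = 1\<^sub>m n"
    using A' B' A B cA cB unfolding inverts_mat_def by auto
  have "A * B * (B' * A') = A * (B * B') * A'"
    using A B cA cB by (simp add: assoc_mult_mat[of _ n n _ n _ n])
  also have "\<dots> = 1\<^sub>m n" using 1 A cA by simp
  finally have x: "A * B * (B' * A') = 1\<^sub>m n" .
  have "B' * A' * (A * B) = B' * (A' * A) * B"
    using A B cA cB by (simp add: assoc_mult_mat[of _ n n _ n _ n])
  also have "\<dots> = 1\<^sub>m n" using 1 B cB by simp
  finally have y: "B' * A' * (A * B) = 1\<^sub>m n" .
  show ?thesis unfolding invertible_mat_def inverts_mat_def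
    using x y A B cA cB by (intro conjI exI[of _ "B' * A'"]) (auto simp: square_mat.simps)
qed

lemma invertible_transpose: assumes A: "A \<in> carrier_mat n n" and iA: "invertible_mat (A::complex mat)"
  shows "invertible_mat (transpose_mat A)"
proof -
  obtain A' where A': "inverts_mat A A'" "inverts_mat A' A" using iA unfolding invertible_mat_def by blast
  have cA: "A' \<in> carrier_mat n n" using inv_carrier[OF A A'] .
  have 1: "A * A' = 1\<^sub>m n" "A' * A = 1\<^sub>m n" using A' A cA unfolding inverts_mat_def by auto
  have x: "transpose_mat A * transpose_mat A' = 1\<^sub>m n"
    using transpose_mult[OF cA A, symmetric] 1 by simp
  have y: "transpose_mat A' * transpose_mat A = 1\<^sub>m n"
    using transpose_mult[OF A cA, symmetric] 1 by simp
  show ?thesis unfolding invertible_mat_def inverts_mat_def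
    using x y A cA by (intro conjI exI[of _ "transpose_mat A'"]) (auto simp: square_mat.simps)
qed

lemma perm_invertible: assumes "\<And>i. i < n \<Longrightarrow> f i < n \<and> g i < n \<and> g (f i) = i \<and> f (g i) = i"
  shows "invertible_mat (perm_mat n f)"
proof -
  have c: "perm_mat n g \<in> carrier_mat n n" "perm_mat n f \<in> carrier_mat n n" by (auto simp: perm_mat_def)
  have x: "perm_mat n f * perm_mat n g = 1\<^sub>m n"
    by (subst perm_left[OF c(1)]) (use assms in \<open>auto intro!: eq_matI simp: perm_mat_def\<close>)
  have y: "perm_mat n g * perm_mat n f = 1\<^sub>m n"
    by (subst perm_left[OF c(2)]) (use assms in \<open>auto intro!: eq_matI simp: perm_mat_def\<close>)
  show ?thesis unfolding invertible_mat_def inverts_mat_def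
    using x y c by (intro conjI exI[of _ "perm_mat n g"]) (auto simp: square_mat.simps)
qed

definition sw :: "nat \<Rightarrow> nat \<Rightarrow> nat \<Rightarrow> nat" where
  "sw a b i = (if i < b then a + i else i - b)"

lemma sw_props: "i < a + b \<Longrightarrow> sw a b i < a + b \<and> sw b a i < a + b \<and> sw b a (sw a b i) = i \<and> sw a b (sw b a i) = i"
  by (auto simp: sw_def)

lemma swap_FB: assumes A1: "A1 \<in> carrier_mat ra ca" and A2: "A2 \<in> carrier_mat rb cb"
  shows "FB A2 A1 = perm_mat (ra+rb) (sw ra rb) * FB A1 A2 * transpose_mat (perm_mat (ca+cb) (sw ca cb))"
proof -
  have c: "FB A1 A2 \<in> carrier_mat (ra+rb) (ca+cb)" using A1 A2 by (auto simp: FB_def)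
  have c2: "mat (ra+rb) (ca+cb) (\<lambda>(i,j). FB A1 A2 $$ (sw ra rb i, j)) \<in> carrier_mat (ra+rb) (ca+cb)" by auto
  show ?thesis
    apply (subst perm_left[OF c])
     apply (simp add: sw_props)
    apply (subst perm_right[OF c2])
     apply (simp add: sw_props)
    apply (rule eq_matI)
    using A1 A2 by (auto simp: FB_def sw_def)
qed


definition gd :: "pencil \<Rightarrow> bool" where
  "gd P \<longleftrightarrow> dim_row (snd P) = dim_row (fst P) \<and> dim_col (snd P) = dim_col (fst P)"

lemma gd_bdiag: "\<forall>P\<in>set Ps. gd P \<Longrightarrow> gd (pencil_bdiag Ps)"
  by (induct Ps) (auto simp: gd_def bdiag_mat_def)

lemma gd_T: "gd P \<Longrightarrow> gd (pencil_transpose P)"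
  by (auto simp: gd_def pencil_transpose_def)

lemma gd_L: "gd (L_block k)" by (simp add: gd_def L_block_def)
lemma gd_LT: "gd (LT_block k)" by (simp add: LT_block_def gd_T gd_L)

lemma TT: "pencil_transpose (pencil_transpose P) = P"
  by (simp add: pencil_transpose_def)

lemma swap_pencil: assumes "\<forall>P\<in>set X. gd P" "\<forall>P\<in>set Y. gd P"
  shows "\<exists>G H. G \<in> carrier_mat (dim_row (fst (pencil_bdiag (X@Y)))) (dim_row (fst (pencil_bdiag (X@Y))))
     \<and> H \<in> carrier_mat (dim_col (fst (pencil_bdiag (X@Y)))) (dim_col (fst (pencil_bdiag (X@Y))))
     \<and> invertible_mat G \<and> invertible_mat H
     \<and> pencil_bdiag (Y@X) = (G * fst (pencil_bdiag (X@Y)) * H, G * snd (pencil_bdiag (X@Y)) * H)"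
proof -
  let ?A1 = "fst (pencil_bdiag X)" let ?B1 = "snd (pencil_bdiag X)"
  let ?A2 = "fst (pencil_bdiag Y)" let ?B2 = "snd (pencil_bdiag Y)"
  have g1: "gd (pencil_bdiag X)" "gd (pencil_bdiag Y)" using assms gd_bdiag by auto
  define ra where "ra = dim_row ?A1" define ca where "ca = dim_col ?A1"
  define rb where "rb = dim_row ?A2" define cb where "cb = dim_col ?A2"
  have c: "?A1 \<in> carrier_mat ra ca" "?B1 \<in> carrier_mat ra ca" "?A2 \<in> carrier_mat rb cb" "?B2 \<in> carrier_mat rb cb"
    using g1 unfolding gd_def ra_def ca_def rb_def cb_def by auto
  have app: "\<And>U V. fst (pencil_bdiag (U@V)) = FB (fst (pencil_bdiag U)) (fst (pencil_bdiag V))"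
            "\<And>U V. snd (pencil_bdiag (U@V)) = FB (snd (pencil_bdiag U)) (snd (pencil_bdiag V))"
    by (simp_all add: bdiag_fst bdiag_snd diag_append)
  define G where "G = perm_mat (ra+rb) (sw ra rb)"
  define H where "H = transpose_mat (perm_mat (ca+cb) (sw ca cb))"
  have d: "dim_row (fst (pencil_bdiag (X@Y))) = ra + rb" "dim_col (fst (pencil_bdiag (X@Y))) = ca + cb"
    unfolding app using c by (auto simp: FB_def)
  show ?thesis
  proof (intro exI conjI)
    show "G \<in> carrier_mat (dim_row (fst (pencil_bdiag (X@Y)))) (dim_row (fst (pencil_bdiag (X@Y))))"
      unfolding d G_def by (simp add: perm_mat_def)
    show "H \<in> carrier_mat (dim_col (fst (pencil_bdiag (X@Y)))) (dim_col (fst (pencil_bdiag (X@Y))))"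
      unfolding d H_def by (simp add: perm_mat_def)
    show "invertible_mat G" unfolding G_def by (rule perm_invertible[of _ _ "sw rb ra"]) (simp add: sw_props)
    have "invertible_mat (perm_mat (ca+cb) (sw ca cb))"
      by (rule perm_invertible[of _ _ "sw cb ca"]) (simp add: sw_props)
    then show "invertible_mat H" unfolding H_def
      by (rule invertible_transpose[rotated, of _ "ca+cb"]) (simp add: perm_mat_def)
    show "pencil_bdiag (Y@X) = (G * fst (pencil_bdiag (X@Y)) * H, G * snd (pencil_bdiag (X@Y)) * H)"
      unfolding app G_def H_def prod_eq_iff fst_conv snd_conv
      using swap_FB[OF c(1) c(3)] swap_FB[OF c(2) c(4)] by simp
  qed
qed

lemma orbit_T: assumes KT: "pencil_transpose K = (G * fst K' * H, G * snd K' * H)"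
  and G: "G \<in> carrier_mat (dim_row (fst K')) (dim_row (fst K'))"
  and H: "H \<in> carrier_mat (dim_col (fst K')) (dim_col (fst K'))"
  and iG: "invertible_mat G" and iH: "invertible_mat H"
  and gK: "gd K" and gK': "gd K'"
  and X: "X \<in> orbit K"
  shows "pencil_transpose X \<in> orbit K'"
proof -
  define r where "r = dim_row (fst K)" define c where "c = dim_col (fst K)"
  obtain E F where XE: "X = (E * fst K * F, E * snd K * F)" and E: "E \<in> carrier_mat r r"
    and F: "F \<in> carrier_mat c c" and iE: "invertible_mat E" and iF: "invertible_mat F"
    using X unfolding orbit_def r_def c_def by blast
  have cK: "fst K \<in> carrier_mat r c" "snd K \<in> carrier_mat r c" using gK unfolding gd_def r_def c_def by auto
  have dT: "dim_row (fst K') = c" "dim_col (fst K') = r"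
  proof -
    have "dim_row (fst (pencil_transpose K)) = c" "dim_col (fst (pencil_transpose K)) = r"
      by (auto simp: pencil_transpose_def c_def r_def)
    then show "dim_row (fst K') = c" "dim_col (fst K') = r" using KT G H by auto
  qed
  have G': "G \<in> carrier_mat c c" and H': "H \<in> carrier_mat r r" using G H dT by auto
  have cK': "fst K' \<in> carrier_mat c r" "snd K' \<in> carrier_mat c r" using gK' dT unfolding gd_def by auto
  have tf: "transpose_mat (fst K) = G * fst K' * H" "transpose_mat (snd K) = G * snd K' * H"
    using KT by (auto simp: pencil_transpose_def)
  have key: "transpose_mat (E * M * F) = (transpose_mat F * G) * M' * (H * transpose_mat E)"
    if M: "M \<in> carrier_mat r c" and M': "M' \<in> carrier_mat c r" and tM: "transpose_mat M = G * M' * H" for M M'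
  proof -
    have "transpose_mat (E * M * F) = transpose_mat F * transpose_mat (E * M)"
      by (rule transpose_mult[of _ r c _ c]) (use E M F in auto)
    also have "transpose_mat (E * M) = transpose_mat M * transpose_mat E"
      by (rule transpose_mult[OF E M])
    finally show ?thesis using tM G' H' E F M'
      by (simp add: assoc_mult_mat[of _ c c _ c _ r] assoc_mult_mat[of _ c r _ r _ r] assoc_mult_mat[of _ c c _ r _ r])
  qed
  have "pencil_transpose X = ((transpose_mat F * G) * fst K' * (H * transpose_mat E),
                              (transpose_mat F * G) * snd K' * (H * transpose_mat E))"
    unfolding XE pencil_transpose_def using key[OF cK(1) cK'(1) tf(1)] key[OF cK(2) cK'(2) tf(2)] by simp
  moreover have "transpose_mat F * G \<in> carrier_mat (dim_row (fst K')) (dim_row (fst K'))"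
    using F G' dT by auto
  moreover have "H * transpose_mat E \<in> carrier_mat (dim_col (fst K')) (dim_col (fst K'))"
    using E H' dT by auto
  moreover have "invertible_mat (transpose_mat F * G)"
    by (rule invertible_mult[of _ c]) (use F G' iF iG invertible_transpose in auto)
  moreover have "invertible_mat (H * transpose_mat E)"
    by (rule invertible_mult[of _ r]) (use E H' iE iH invertible_transpose in auto)
  ultimately show ?thesis unfolding orbit_def by blast
qed


lemma K_split: assumes "b \<le> r"
  shows "\<exists>X Y. (\<forall>P\<in>set X. gd P) \<and> (\<forall>P\<in>set Y. gd P) \<and> K_pencil q p r (r-b) = pencil_bdiag (X@Y)
     \<and> pencil_transpose (K_pencil p q r b) = pencil_bdiag (Y@X)"
proof -
  define \<alpha> where "\<alpha> = b div (q - r)" define s where "s = b mod (q - r)"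
  define \<beta> where "\<beta> = (r - b) div (p - r)" define t where "t = (r - b) mod (p - r)"
  define Ls where "Ls = replicate s (L_block (\<alpha> + 1)) @ replicate (q - r - s) (L_block \<alpha>)"
  define LTs where "LTs = replicate t (LT_block (\<beta> + 1)) @ replicate (p - r - t) (LT_block \<beta>)"
  have rb: "r - (r - b) = b" using assms by simp
  have K1: "K_pencil p q r b = pencil_bdiag (Ls @ LTs)"
    unfolding K_pencil_def Let_def Ls_def LTs_def \<alpha>_def s_def \<beta>_def t_def by simp
  have K2: "K_pencil q p r (r-b) = pencil_bdiag (map pencil_transpose LTs @ map pencil_transpose Ls)"
    unfolding K_pencil_def Let_def Ls_def LTs_def \<alpha>_def s_def \<beta>_def t_def rb
    by (simp add: LT_block_def TT)
  show ?thesis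
  proof (intro exI conjI)
    show "K_pencil q p r (r-b) = pencil_bdiag (map pencil_transpose LTs @ map pencil_transpose Ls)" by (rule K2)
    show "pencil_transpose (K_pencil p q r b) = pencil_bdiag (map pencil_transpose Ls @ map pencil_transpose LTs)"
      unfolding K1 pt_bdiag by simp
    show "\<forall>P\<in>set (map pencil_transpose LTs). gd P" unfolding LTs_def by (auto intro!: gd_T gd_LT)
    show "\<forall>P\<in>set (map pencil_transpose Ls). gd P" unfolding Ls_def by (auto intro!: gd_T gd_L)
  qed
qed

theorem lemma3p8:
  fixes m n r a :: nat and Q :: pencil
  assumes "0 < m" and "0 < n"
    and "1 \<le> r"
    and "m \<noteq> n \<Longrightarrow> r \<le> min m n"
    and "m = n \<Longrightarrow> r \<le> n - 1"
    and "a \<le> r"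
    and "is_pencil m n Q"
    and "normal_rank Q \<le> r"
    and "Q \<in> pencil_closure m n (orbit (K_pencil m n r a))"
  shows "pencil_transpose Q \<in> pencil_closure n m (orbit (K_pencil n m r (r - a)))"
proof -
  obtain X Y where gX: "\<forall>P\<in>set X. gd P" and gY: "\<forall>P\<in>set Y. gd P"
    and K2: "K_pencil n m r (r-a) = pencil_bdiag (X@Y)"
    and K1: "pencil_transpose (K_pencil m n r a) = pencil_bdiag (Y@X)"
    using K_split[OF assms(6), of n m] by (elim exE conjE) (rule that)
  obtain G H where G: "G \<in> carrier_mat (dim_row (fst (pencil_bdiag (X@Y)))) (dim_row (fst (pencil_bdiag (X@Y))))"
     and H: "H \<in> carrier_mat (dim_col (fst (pencil_bdiag (X@Y)))) (dim_col (fst (pencil_bdiag (X@Y))))"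
     and iG: "invertible_mat G" and iH: "invertible_mat H"
     and sw: "pencil_bdiag (Y@X) = (G * fst (pencil_bdiag (X@Y)) * H, G * snd (pencil_bdiag (X@Y)) * H)"
    using swap_pencil[OF gX gY] by (elim exE conjE) (rule that)
  have gK2: "gd (K_pencil n m r (r-a))" unfolding K2 using gX gY by (auto intro!: gd_bdiag)
  have gK1: "gd (K_pencil m n r a)"
  proof -
    have "gd (pencil_transpose (K_pencil m n r a))" unfolding K1 using gX gY by (auto intro!: gd_bdiag)
    then show ?thesis using gd_T TT by metis
  qed
  have orb: "Z \<in> orbit (K_pencil m n r a) \<Longrightarrow> pencil_transpose Z \<in> orbit (K_pencil n m r (r - a))" for Z
    by (rule orbit_T[OF _ G[folded K2] H[folded K2] iG iH gK1 gK2]) (simp add: K1 sw K2)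
  obtain Xs where Xs: "\<forall>k. Xs k \<in> orbit (K_pencil m n r a) \<and> is_pencil m n (Xs k)"
    and lim: "\<forall>i<m. \<forall>j<n. (\<lambda>k. fst (Xs k) $$ (i,j)) \<longlonglongrightarrow> fst Q $$ (i,j) \<and>
                       (\<lambda>k. snd (Xs k) $$ (i,j)) \<longlonglongrightarrow> snd Q $$ (i,j)"
    using assms(9) unfolding pencil_closure_def by blast
  have pT: "is_pencil m n P \<Longrightarrow> is_pencil n m (pencil_transpose P)" for P
    by (auto simp: is_pencil_def pencil_transpose_def)
  show ?thesis unfolding pencil_closure_def
  proof (intro CollectI conjI exI[of _ "\<lambda>k. pencil_transpose (Xs k)"] allI impI)
    show "is_pencil n m (pencil_transpose Q)" using pT assms(7) .
    fix k show "pencil_transpose (Xs k) \<in> orbit (K_pencil n m r (r - a))" using orb Xs by blast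
    show "is_pencil n m (pencil_transpose (Xs k))" using pT Xs by blast
  next
    fix i j assume i: "i < n" and j: "j < m"
    have cX: "\<And>k. fst (Xs k) \<in> carrier_mat m n \<and> snd (Xs k) \<in> carrier_mat m n"
      using Xs unfolding is_pencil_def by blast
    have cQ: "fst Q \<in> carrier_mat m n" "snd Q \<in> carrier_mat m n" using assms(7) unfolding is_pencil_def by auto
    have l1: "(\<lambda>k. fst (Xs k) $$ (j,i)) \<longlonglongrightarrow> fst Q $$ (j,i)"
      and l2: "(\<lambda>k. snd (Xs k) $$ (j,i)) \<longlonglongrightarrow> snd Q $$ (j,i)" using lim i j by blast+
    have e1: "fst (pencil_transpose (Xs k)) $$ (i,j) = fst (Xs k) $$ (j,i)"
      and e2: "snd (pencil_transpose (Xs k)) $$ (i,j) = snd (Xs k) $$ (j,i)" for k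
      using cX[of k] i j by (auto simp: pencil_transpose_def)
    have e3: "fst (pencil_transpose Q) $$ (i,j) = fst Q $$ (j,i)"
      and e4: "snd (pencil_transpose Q) $$ (i,j) = snd Q $$ (j,i)"
      using cQ i j by (auto simp: pencil_transpose_def)
    show "(\<lambda>k. fst (pencil_transpose (Xs k)) $$ (i,j)) \<longlonglongrightarrow> fst (pencil_transpose Q) $$ (i,j)"
      unfolding e1 e3 by (rule l1)
    show "(\<lambda>k. snd (pencil_transpose (Xs k)) $$ (i,j)) \<longlonglongrightarrow> snd (pencil_transpose Q) $$ (i,j)"
      unfolding e2 e4 by (rule l2)
  qed
qed

end
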